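(* Let $J=\bigoplus_{(k,m)\in\mathbb{Z}_{\ge0}^2}J_{k,m}$ be a commutative bigraded ring. For $n\in\mathbb{Q}_{>0}$ put $J_n=\bigoplus_{(k,m):\,m=kn}J_{k,m}$ and $J_{\le n}=\bigoplus_{(k,m):\,m\le kn}J_{k,m}$. Fix $n\in\mathbb{Q}_{>0}$ and suppose that $J_{\le n}$ is finitely generated as an algebra over $J_{0,0}$. Then $J_n$ is finitely generated as an algebra over $J_{0,0}$.
   Context: The sums defining $J_n$ and $J_{\le n}$ range over pairs $(k,m)\in\mathbb{Z}_{\ge0}^2$; both are subrings of $J$ containing $J_{0,0}$. *)

theory Defs
  imports Complex_Main
begin

definition bigraded :: "(nat \<Rightarrow> nat \<Rightarrow> 'a::comm_ring_1 set) \<Rightarrow> bool" where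
  "bigraded J \<longleftrightarrow>
     (\<forall>k m. 0 \<in> J k m \<and> (\<forall>x\<in>J k m. \<forall>y\<in>J k m. x + y \<in> J k m) \<and> (\<forall>x\<in>J k m. - x \<in> J k m))
   \<and> (\<forall>k m k' m' x y. x \<in> J k m \<longrightarrow> y \<in> J k' m' \<longrightarrow> x * y \<in> J (k + k') (m + m'))
   \<and> 1 \<in> J 0 0
   \<and> (\<forall>x. \<exists>!f. finite {p. f p \<noteq> 0} \<and> (\<forall>k m. f (k, m) \<in> J k m)
                 \<and> x = (\<Sum>p\<in>{p. f p \<noteq> 0}. f p))"

definition graded_part :: "(nat \<Rightarrow> nat \<Rightarrow> 'a::comm_ring_1 set) \<Rightarrow> (nat \<Rightarrow> nat \<Rightarrow> bool) \<Rightarrow> 'a set" where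
  "graded_part J P = {x. \<exists>f. finite {p. f p \<noteq> 0} \<and> (\<forall>k m. f (k, m) \<in> J k m)
       \<and> (\<forall>k m. f (k, m) \<noteq> 0 \<longrightarrow> P k m) \<and> x = (\<Sum>p\<in>{p. f p \<noteq> 0}. f p)}"

definition J_eq :: "(nat \<Rightarrow> nat \<Rightarrow> 'a::comm_ring_1 set) \<Rightarrow> rat \<Rightarrow> 'a set" where
  "J_eq J n = graded_part J (\<lambda>k m. of_nat m = of_nat k * n)"

definition J_le :: "(nat \<Rightarrow> nat \<Rightarrow> 'a::comm_ring_1 set) \<Rightarrow> rat \<Rightarrow> 'a set" where
  "J_le J n = graded_part J (\<lambda>k m. of_nat m \<le> of_nat k * n)"

inductive_set ring_gen :: "'a::comm_ring_1 set \<Rightarrow> 'a set" for A where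
  gen: "a \<in> A \<Longrightarrow> a \<in> ring_gen A"
| one: "1 \<in> ring_gen A"
| zero: "0 \<in> ring_gen A"
| neg: "a \<in> ring_gen A \<Longrightarrow> - a \<in> ring_gen A"
| add: "a \<in> ring_gen A \<Longrightarrow> b \<in> ring_gen A \<Longrightarrow> a + b \<in> ring_gen A"
| mult: "a \<in> ring_gen A \<Longrightarrow> b \<in> ring_gen A \<Longrightarrow> a * b \<in> ring_gen A"

definition fin_gen_algebra :: "'a::comm_ring_1 set \<Rightarrow> 'a set \<Rightarrow> bool" where
  "fin_gen_algebra R B \<longleftrightarrow> (\<exists>S. finite S \<and> S \<subseteq> B \<and> ring_gen (R \<union> S) = B)"

end

theory Submission
  imports Defs
begin

locale bg =
  fixes J :: "nat \<Rightarrow> nat \<Rightarrow> 'a::comm_ring_1 set"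
  assumes bg: "bigraded J"
begin

lemma zero_in: "0 \<in> J k m" using bg unfolding bigraded_def by blast
lemma add_in: "x \<in> J k m \<Longrightarrow> y \<in> J k m \<Longrightarrow> x + y \<in> J k m" using bg unfolding bigraded_def by blast
lemma mult_in: "x \<in> J k m \<Longrightarrow> y \<in> J k' m' \<Longrightarrow> x * y \<in> J (k + k') (m + m')"
  using bg unfolding bigraded_def by blast
lemma one_in: "1 \<in> J 0 0" using bg unfolding bigraded_def by blast

definition dec :: "(nat \<times> nat \<Rightarrow> 'a) \<Rightarrow> bool" where
  "dec f \<longleftrightarrow> finite {p. f p \<noteq> 0} \<and> (\<forall>k m. f (k, m) \<in> J k m)"

definition comp :: "'a \<Rightarrow> nat \<times> nat \<Rightarrow> 'a" where
  "comp x = (THE f. dec f \<and> x = (\<Sum>p\<in>{p. f p \<noteq> 0}. f p))"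

lemma ex1': "\<exists>!f. dec f \<and> x = (\<Sum>p\<in>{p. f p \<noteq> 0}. f p)"
proof -
  have "\<forall>x. \<exists>!f. finite {p. f p \<noteq> 0} \<and> (\<forall>k m. f (k, m) \<in> J k m) \<and> x = (\<Sum>p\<in>{p. f p \<noteq> 0}. f p)"
    using bg unfolding bigraded_def by (elim conjE) assumption
  then show ?thesis unfolding dec_def conj_assoc by (rule spec)
qed

lemma comp_both: "dec (comp x) \<and> x = (\<Sum>p\<in>{p. comp x p \<noteq> 0}. comp x p)"
  unfolding comp_def by (rule theI'[OF ex1'])

lemma comp: "dec (comp x)" "x = (\<Sum>p\<in>{p. comp x p \<noteq> 0}. comp x p)"
  using comp_both[of x] by (rule conjunct1, rule conjunct2)

lemma comp_fin: "finite {p. comp x p \<noteq> 0}" using comp(1) unfolding dec_def by blast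
lemma comp_in: "comp x (k, m) \<in> J k m" using comp(1) unfolding dec_def by blast

lemma sum_supp: "finite A \<Longrightarrow> {p. f p \<noteq> 0} \<subseteq> A \<Longrightarrow> sum f A = (\<Sum>p\<in>{p. f p \<noteq> 0}. f p)"
  by (rule sum.mono_neutral_right) auto

lemma comp_unique:
  assumes "dec f" "finite A" "{p. f p \<noteq> 0} \<subseteq> A" "x = sum f A"
  shows "comp x = f"
  unfolding comp_def
  by (rule the1_equality[OF ex1']) (use assms sum_supp in auto)

lemma comp_add: "comp (x + y) = (\<lambda>p. comp x p + comp y p)"
proof (rule comp_unique)
  let ?A = "{p. comp x p \<noteq> 0} \<union> {p. comp y p \<noteq> 0}"
  show fA: "finite ?A" using comp_fin by auto
  show sub: "{p. comp x p + comp y p \<noteq> 0} \<subseteq> ?A" by auto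
  show "dec (\<lambda>p. comp x p + comp y p)" unfolding dec_def
    using finite_subset[OF sub fA] add_in comp_in by auto
  have hx: "sum (comp x) ?A = x" using sum_supp[OF fA, of "comp x"] comp(2)[of x] by auto
  have hy: "sum (comp y) ?A = y" using sum_supp[OF fA, of "comp y"] comp(2)[of y] by auto
  show "x + y = (\<Sum>p\<in>?A. comp x p + comp y p)" by (simp only: sum.distrib hx hy)
qed

lemma comp_add': "comp (x + y) p = comp x p + comp y p"
  by (simp add: comp_add)

lemma comp_hom: "h \<in> J k m \<Longrightarrow> comp h = (\<lambda>p. if p = (k, m) then h else 0)"
  by (rule comp_unique[where A = "{(k,m)}"]) (auto simp: dec_def zero_in)

lemma comp_0: "comp 0 = (\<lambda>p. 0)"
  using comp_hom[OF zero_in[of 0 0]] by simp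

definition pi :: "(nat \<Rightarrow> nat \<Rightarrow> bool) \<Rightarrow> 'a \<Rightarrow> 'a" where
  "pi L x = (\<Sum>p\<in>{p. comp x p \<noteq> 0}. if L (fst p) (snd p) then comp x p else 0)"

lemma pi_sup: "finite A \<Longrightarrow> {p. comp x p \<noteq> 0} \<subseteq> A \<Longrightarrow>
   pi L x = (\<Sum>p\<in>A. if L (fst p) (snd p) then comp x p else 0)"
  unfolding pi_def by (rule sum.mono_neutral_left) auto

lemma pi_add: "pi L (x + y) = pi L x + pi L y"
proof -
  let ?A = "{p. comp x p \<noteq> 0} \<union> {p. comp y p \<noteq> 0}"
  have fA: "finite ?A" using comp_fin by auto
  have "pi L (x + y) = (\<Sum>p\<in>?A. if L (fst p) (snd p) then comp x p + comp y p else 0)"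
    by (subst pi_sup[OF fA]) (auto simp: comp_add' cong: if_cong)
  also have "\<dots> = (\<Sum>p\<in>?A. (if L (fst p) (snd p) then comp x p else 0) + (if L (fst p) (snd p) then comp y p else 0))"
    by (rule sum.cong) auto
  also have "\<dots> = pi L x + pi L y"
    by (simp add: sum.distrib pi_sup[OF fA])
  finally show ?thesis .
qed

lemma pi_0: "pi L 0 = 0" unfolding pi_def comp_0 by simp

lemma pi_neg: "pi L (- x) = - pi L x"
  using pi_add[of L x "- x"] pi_0[of L] by (simp add: eq_neg_iff_add_eq_0 add.commute)

lemma pi_sum: "finite I \<Longrightarrow> pi L (sum h I) = (\<Sum>i\<in>I. pi L (h i))"
  by (induction I rule: finite_induct) (auto simp: pi_0 pi_add)

lemma pi_hom: "h \<in> J k m \<Longrightarrow> pi L h = (if L k m then h else 0)"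
  by (subst pi_sup[where A = "{(k,m)}"]) (auto simp: comp_hom)

lemma pi_in: "pi L x \<in> graded_part J L"
proof -
  let ?f = "\<lambda>p. if L (fst p) (snd p) then comp x p else 0"
  have sub: "{p. ?f p \<noteq> 0} \<subseteq> {p. comp x p \<noteq> 0}" by auto
  have "pi L x = sum ?f {p. ?f p \<noteq> 0}"
    unfolding pi_def by (rule sum_supp[OF comp_fin sub])
  moreover have "finite {p. ?f p \<noteq> 0}" using finite_subset[OF sub comp_fin] .
  moreover have "\<forall>k m. ?f (k, m) \<in> J k m" using comp_in zero_in by simp
  moreover have "\<forall>k m. ?f (k, m) \<noteq> 0 \<longrightarrow> L k m" by simp
  ultimately show ?thesis unfolding graded_part_def
    by (intro CollectI exI[of _ ?f] conjI) assumption+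
qed

lemma gp_repr: "x \<in> graded_part J L \<Longrightarrow> \<exists>A f. finite A \<and>
   (\<forall>p\<in>A. f p \<in> J (fst p) (snd p) \<and> L (fst p) (snd p)) \<and> x = sum f A"
proof -
  assume "x \<in> graded_part J L"
  then obtain f where f: "finite {p. f p \<noteq> 0}" "\<forall>k m. f (k, m) \<in> J k m"
    "\<forall>k m. f (k, m) \<noteq> 0 \<longrightarrow> L k m" "x = (\<Sum>p\<in>{p. f p \<noteq> 0}. f p)"
    unfolding graded_part_def by auto
  have "\<forall>p\<in>{p. f p \<noteq> 0}. f p \<in> J (fst p) (snd p) \<and> L (fst p) (snd p)"
    using f(2,3) by auto
  then show ?thesis using f(1,4) by blast
qed

lemma gp_elim: "x \<in> graded_part J L \<Longrightarrow> comp x p \<noteq> 0 \<Longrightarrow> L (fst p) (snd p)"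
proof -
  assume "x \<in> graded_part J L" "comp x p \<noteq> 0"
  then obtain f where f: "finite {p. f p \<noteq> 0}" "\<forall>k m. f (k, m) \<in> J k m"
    "\<forall>k m. f (k, m) \<noteq> 0 \<longrightarrow> L k m" "x = (\<Sum>p\<in>{p. f p \<noteq> 0}. f p)"
    unfolding graded_part_def by auto
  have "comp x = f" by (rule comp_unique[OF _ f(1)]) (use f in \<open>auto simp: dec_def\<close>)
  then show ?thesis using f(3) \<open>comp x p \<noteq> 0\<close> by (cases p) auto
qed

lemma pi_id: "x \<in> graded_part J L \<Longrightarrow> pi L x = x"
proof -
  assume a: "x \<in> graded_part J L"
  have "pi L x = (\<Sum>p\<in>{p. comp x p \<noteq> 0}. comp x p)"
    unfolding pi_def by (rule sum.cong) (auto dest: gp_elim[OF a])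
  then show ?thesis using comp(2)[of x] by simp
qed

lemma gp_iff: "x \<in> graded_part J L \<longleftrightarrow> pi L x = x"
  using pi_in pi_id by metis

lemma pi_mult:
  assumes key: "\<And>k m k' m'. L k m \<Longrightarrow> L k' m' \<Longrightarrow> (L' (k+k') (m+m') \<longleftrightarrow> L' k m \<and> L' k' m')"
    and x: "x \<in> graded_part J L" and y: "y \<in> graded_part J L"
  shows "pi L' (x * y) = pi L' x * pi L' y"
proof -
  obtain A f where A: "finite A" "\<forall>p\<in>A. f p \<in> J (fst p) (snd p) \<and> L (fst p) (snd p)" "x = sum f A"
    using gp_repr[OF x] by blast
  obtain B g where B: "finite B" "\<forall>p\<in>B. g p \<in> J (fst p) (snd p) \<and> L (fst p) (snd p)" "y = sum g B"
    using gp_repr[OF y] by blast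
  have "x * y = (\<Sum>p\<in>A. \<Sum>q\<in>B. f p * g q)" using A(3) B(3) by (simp add: sum_product)
  then have "pi L' (x * y) = (\<Sum>p\<in>A. \<Sum>q\<in>B. pi L' (f p * g q))"
    using A(1) B(1) by (simp add: pi_sum)
  also have "\<dots> = (\<Sum>p\<in>A. \<Sum>q\<in>B. (if L' (fst p) (snd p) then f p else 0) * (if L' (fst q) (snd q) then g q else 0))"
  proof (intro sum.cong refl)
    fix p q assume p: "p \<in> A" and q: "q \<in> B"
    have "f p * g q \<in> J (fst p + fst q) (snd p + snd q)" using A(2) B(2) p q mult_in by blast
    then show "pi L' (f p * g q) = (if L' (fst p) (snd p) then f p else 0) * (if L' (fst q) (snd q) then g q else 0)"
      using key[of "fst p" "snd p" "fst q" "snd q"] A(2) B(2) p q by (simp add: pi_hom)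
  qed
  also have "\<dots> = pi L' x * pi L' y"
  proof -
    have hf: "pi L' (f p) = (if L' (fst p) (snd p) then f p else 0)" if "p \<in> A" for p
      using pi_hom A(2) that by blast
    have hg: "pi L' (g p) = (if L' (fst p) (snd p) then g p else 0)" if "p \<in> B" for p
      using pi_hom B(2) that by blast
    have "pi L' x = (\<Sum>p\<in>A. if L' (fst p) (snd p) then f p else 0)"
      unfolding A(3) pi_sum[OF A(1)] using hf by (rule sum.cong[OF refl])
    moreover have "pi L' y = (\<Sum>p\<in>B. if L' (fst p) (snd p) then g p else 0)"
      unfolding B(3) pi_sum[OF B(1)] using hg by (rule sum.cong[OF refl])
    ultimately show ?thesis by (simp add: sum_product)
  qed
  finally show ?thesis .
qed

end

theorem proposition6p10:
  fixes J :: "nat \<Rightarrow> nat \<Rightarrow> 'a::comm_ring_1 set" and n :: rat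
  assumes "bigraded J"
    and "n > 0"
    and "fin_gen_algebra (J 0 0) (J_le J n)"
  shows "fin_gen_algebra (J 0 0) (J_eq J n)"
proof -
  interpret bg J by unfold_locales (rule assms(1))
  define L where "L = (\<lambda>k m. (of_nat m :: rat) \<le> of_nat k * n)"
  define L' where "L' = (\<lambda>k m. (of_nat m :: rat) = of_nat k * n)"
  define P where "P = pi L'"
  have le: "J_le J n = graded_part J L" unfolding J_le_def L_def ..
  have eq: "J_eq J n = graded_part J L'" unfolding J_eq_def L'_def ..
  obtain S where S: "finite S" "S \<subseteq> J_le J n" "ring_gen (J 0 0 \<union> S) = J_le J n"
    using assms(3) unfolding fin_gen_algebra_def by blast
  have key: "L k m \<Longrightarrow> L k' m' \<Longrightarrow> (L' (k+k') (m+m') \<longleftrightarrow> L' k m \<and> L' k' m')" for k m k' m'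
    unfolding L_def L'_def by (auto simp: algebra_simps)
  have eq_le: "J_eq J n \<subseteq> J_le J n"
    unfolding J_eq_def J_le_def graded_part_def by fastforce
  have Peq: "x \<in> J_eq J n \<longleftrightarrow> P x = x" for x unfolding eq P_def by (rule gp_iff)
  have Pin: "P x \<in> J_eq J n" for x unfolding eq P_def by (rule pi_in)
  have Pmult: "x \<in> J_le J n \<Longrightarrow> y \<in> J_le J n \<Longrightarrow> P (x * y) = P x * P y" for x y
    unfolding le P_def by (rule pi_mult[of L L', OF key])
  have P00: "h \<in> J 0 0 \<Longrightarrow> P h = h" for h unfolding P_def by (simp add: pi_hom L'_def)
  have P1: "P 1 = 1" using P00[OF one_in] .
  have img: "x \<in> ring_gen (J 0 0 \<union> S) \<Longrightarrow> P x \<in> ring_gen (J 0 0 \<union> P ` S)" for x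
  proof (induction rule: ring_gen.induct)
    case (gen a)
    then show ?case by (auto simp: P00 intro: ring_gen.gen)
  next
    case one then show ?case by (simp add: P1 ring_gen.one)
  next
    case zero then show ?case by (simp add: P_def pi_0 ring_gen.zero)
  next
    case (neg a) then show ?case by (simp add: P_def pi_neg ring_gen.neg)
  next
    case (add a b) then show ?case by (simp add: P_def pi_add ring_gen.add)
  next
    case (mult a b) then show ?case using S(3) by (simp add: Pmult ring_gen.mult)
  qed
  have "ring_gen (J 0 0 \<union> P ` S) = J_eq J n"
  proof
    show "ring_gen (J 0 0 \<union> P ` S) \<subseteq> J_eq J n"
    proof
      fix x assume "x \<in> ring_gen (J 0 0 \<union> P ` S)"
      then show "x \<in> J_eq J n"
      proof (induction rule: ring_gen.induct)
        case (gen a) then show ?case using P00 Peq Pin by auto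
      next
        case one then show ?case using P1 Peq by auto
      next
        case zero then show ?case using Peq by (simp add: P_def pi_0)
      next
        case (neg a) then show ?case using Peq by (simp add: P_def pi_neg)
      next
        case (add a b) then show ?case using Peq by (simp add: P_def pi_add)
      next
        case (mult a b)
        then have "a \<in> J_le J n" "b \<in> J_le J n" using eq_le by auto
        then have "P (a * b) = P a * P b" by (rule Pmult)
        then show ?case using mult.IH Peq by simp
      qed
    qed
    show "J_eq J n \<subseteq> ring_gen (J 0 0 \<union> P ` S)"
    proof
      fix x assume x: "x \<in> J_eq J n"
      then have "x \<in> ring_gen (J 0 0 \<union> S)" using eq_le S(3) by auto
      then have "P x \<in> ring_gen (J 0 0 \<union> P ` S)" by (rule img)
      then show "x \<in> ring_gen (J 0 0 \<union> P ` S)" using x Peq by simp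
    qed
  qed
  moreover have "P ` S \<subseteq> J_eq J n" using Pin by auto
  ultimately show ?thesis unfolding fin_gen_algebra_def using S(1) by blast
qed

end
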